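(* Let $(B_j)_{j\ge1}$ be a sequence of Cantor-built subsets of $[0,1]$ such that $m(B_j)=\frac{1}{(e-1)\,j!}$ for all $j$, $m(B_j\cap B_k)=0$ whenever $j\neq k$, $m(\bigcup_j B_j)=1$, and for each nondegenerate subinterval $J\subset[0,1]$ there is $j_0\in\mathbb{N}$ such that for every $j\ge j_0$ some Cantor component of $B_j$ is contained in $J$. Let $\{\theta_\alpha:\alpha<\mathfrak{c}\}$ be a set of real numbers strictly greater than $1$ such that $\{\ln\theta_\alpha:\alpha<\mathfrak{c}\}$ is linearly independent over $\mathbb{Q}$, and for each $\alpha<\mathfrak{c}$ put $g_\alpha=\sum_{j=1}^\infty \theta_\alpha^j\chi_{B_j}$. Then $\{g_\alpha:\alpha<\mathfrak{c}\}$ is a set of free generators (in the algebra of measurable functions on $[0,1]$ modulo a.e. equality, with pointwise operations), and the algebra generated by this set is contained in $\mathcal{G}\cup\{0\}$. In particular, $\mathcal{G}$ is strongly $\mathfrak{c}$-algebrable.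
   Context: $m$ denotes Lebesgue measure and $\mathfrak{c}$ the cardinality of the continuum. $\mathcal{G}$ is the set of Lebesgue integrable functions on $[0,1]$ that are not essentially bounded on any nondegenerate subinterval of $[0,1]$. A Cantor set in $[a,b]$ is a perfect, uncountable, nowhere dense subset of $[a,b]$ containing $a$ and $b$, obtained by removing from $[a,b]$ a countable union of pairwise disjoint open intervals. A nonvoid set $B\subset[0,1]$ is Cantor-built with Cantor components $A_j$ ($j\in\Gamma$) if $B=\bigcup_{j\in\Gamma}A_j$, each $A_j$ is a Cantor set in some subinterval $[c_j,d_j]\subset[0,1]$, and $m([c_j,d_j]\cap[c_k,d_k])=0$ for $j\neq k$. In a commutative algebra, a set $Z=\{z_\alpha:\alpha<\kappa\}$ is a set of free generators if for every polynomial $P$ without constant term and distinct $z_{\alpha_1},\dots,z_{\alpha_n}\in Z$, $P(z_{\alpha_1},\dots,z_{\alpha_n})=0$ iff $P=0$. A subset $S$ of an algebra is strongly $\kappa$-algebrable if there is a $\kappa$-generated free algebra contained in $S\cup\{0\}$. *)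

theory Defs
  imports "HOL-Analysis.Analysis" "HOL-Library.Equipollence"
begin

definition cantor_set :: "real set \<Rightarrow> real \<Rightarrow> real \<Rightarrow> bool" where
  "cantor_set A a b \<longleftrightarrow>
     A \<subseteq> {a..b} \<and> a \<in> A \<and> b \<in> A \<and>
     closed A \<and> (\<forall>x\<in>A. x islimpt A) \<and>
     uncountable A \<and>
     interior (closure A) = {} \<and>
     (\<exists>\<U>. countable \<U> \<and> (\<forall>U\<in>\<U>. \<exists>p q. U = {p<..<q}) \<and> disjoint \<U> \<and>
          A = {a..b} - \<Union>\<U>)"

definition cantor_built ::
  "real set \<Rightarrow> 'i set \<Rightarrow> ('i \<Rightarrow> real set) \<Rightarrow> ('i \<Rightarrow> real) \<Rightarrow> ('i \<Rightarrow> real) \<Rightarrow> bool" where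
  "cantor_built B \<Gamma> A c d \<longleftrightarrow>
     B \<noteq> {} \<and> B = (\<Union>j\<in>\<Gamma>. A j) \<and>
     (\<forall>j\<in>\<Gamma>. {c j..d j} \<subseteq> {0..1} \<and> cantor_set (A j) (c j) (d j)) \<and>
     (\<forall>j\<in>\<Gamma>. \<forall>k\<in>\<Gamma>. j \<noteq> k \<longrightarrow> measure lebesgue ({c j..d j} \<inter> {c k..d k}) = 0)"

definition nondeg_subinterval :: "real set \<Rightarrow> bool" where
  "nondeg_subinterval J \<longleftrightarrow> is_interval J \<and> J \<subseteq> {0..1} \<and> (\<exists>x\<in>J. \<exists>y\<in>J. x < y)"

definition inG :: "(real \<Rightarrow> real) \<Rightarrow> bool" where
  "inG f \<longleftrightarrow> integrable (lebesgue_on {0..1}) f \<and>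
     (\<forall>J. nondeg_subinterval J \<longrightarrow> \<not> (\<exists>M. AE x in lebesgue_on J. \<bar>f x\<bar> \<le> M))"

text \<open>Real polynomials in the variables X_0,...,X_(n-1): a finitely supported
coefficient function on exponent vectors, exponents vanishing beyond n.\<close>
definition poly_in :: "nat \<Rightarrow> ((nat \<Rightarrow> nat) \<Rightarrow> real) \<Rightarrow> bool" where
  "poly_in n P \<longleftrightarrow> finite {k. P k \<noteq> 0} \<and> (\<forall>k. P k \<noteq> 0 \<longrightarrow> (\<forall>i\<ge>n. k i = 0))"

definition peval :: "((nat \<Rightarrow> nat) \<Rightarrow> real) \<Rightarrow> (nat \<Rightarrow> real) \<Rightarrow> real" where
  "peval P z = (\<Sum>k\<in>{k. P k \<noteq> 0}. P k * (\<Prod>i\<in>{i. k i \<noteq> 0}. z i ^ k i))"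

definition no_const_term :: "((nat \<Rightarrow> nat) \<Rightarrow> real) \<Rightarrow> bool" where
  "no_const_term P \<longleftrightarrow> P (\<lambda>_. 0) = 0"

end

theory Submission imports Defs begin


lemma dom_lemma:
  fixes M :: "real set" and c :: "real \<Rightarrow> real"
  assumes fin: "finite M" and gt: "\<And>\<mu>. \<mu> \<in> M \<Longrightarrow> \<mu> > 1" and nz: "\<exists>\<mu>\<in>M. c \<mu> \<noteq> 0"
  shows "filterlim (\<lambda>j::nat. \<bar>\<Sum>\<mu>\<in>M. c \<mu> * \<mu> ^ j\<bar>) at_top sequentially"
proof -
  define M' where "M' = {\<mu>\<in>M. c \<mu> \<noteq> 0}"
  have fin': "finite M'" "M' \<noteq> {}" using fin nz by (auto simp: M'_def)
  define l where "l = Max M'"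
  have lM: "l \<in> M'" using fin' by (simp add: l_def)
  have l1: "l > 1" using lM gt by (auto simp: M'_def)
  have lmax: "\<And>\<mu>. \<mu> \<in> M' \<Longrightarrow> \<mu> \<le> l" using fin' by (simp add: l_def)
  have eqM: "(\<Sum>\<mu>\<in>M. c \<mu> * \<mu> ^ j) = (\<Sum>\<mu>\<in>M'. c \<mu> * \<mu> ^ j)" for j
    by (rule sum.mono_neutral_right) (auto simp: M'_def fin)
  have eq2: "(\<Sum>\<mu>\<in>M'. c \<mu> * \<mu> ^ j) = l ^ j * (\<Sum>\<mu>\<in>M'. c \<mu> * (\<mu>/l) ^ j)" for j
    using l1 by (simp add: sum_distrib_left power_divide field_simps)
  have t0: "(\<lambda>j. (\<Sum>\<mu>\<in>M'-{l}. c \<mu> * (\<mu>/l) ^ j)) \<longlonglongrightarrow> (\<Sum>\<mu>\<in>M'-{l}. c \<mu> * 0)"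
  proof (intro tendsto_intros LIMSEQ_power_zero)
    fix \<mu> assume "\<mu> \<in> M'-{l}"
    then have "\<mu> > 1" "\<mu> < l" using lmax gt by (auto simp: M'_def order.strict_iff_order)
    then show "norm (\<mu>/l) < 1" using l1 by simp
  qed
  have "(\<lambda>j. (\<Sum>\<mu>\<in>M'. c \<mu> * (\<mu>/l) ^ j)) = (\<lambda>j. c l + (\<Sum>\<mu>\<in>M'-{l}. c \<mu> * (\<mu>/l) ^ j))"
    using lM fin' l1 by (simp add: sum.remove)
  with t0 have t1: "(\<lambda>j. (\<Sum>\<mu>\<in>M'. c \<mu> * (\<mu>/l) ^ j)) \<longlonglongrightarrow> c l"
    using tendsto_add[OF tendsto_const t0, of "c l"] by simp
  have t2: "(\<lambda>j. \<bar>\<Sum>\<mu>\<in>M'. c \<mu> * (\<mu>/l) ^ j\<bar>) \<longlonglongrightarrow> \<bar>c l\<bar>"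
    by (rule tendsto_rabs[OF t1])
  have cl: "\<bar>c l\<bar> > 0" using lM by (simp add: M'_def)
  have inf: "filterlim (\<lambda>j::nat. l ^ j) at_top sequentially"
  proof -
    have "filterlim (\<lambda>j::nat. norm (l ^ j)) at_top sequentially"
      using l1 by (intro filterlim_at_infinity_imp_norm_at_top filterlim_realpow_sequentially_gt1) simp
    then show ?thesis using l1 by (simp add: norm_power)
  qed
  have "filterlim (\<lambda>j. \<bar>\<Sum>\<mu>\<in>M'. c \<mu> * (\<mu>/l) ^ j\<bar> * l ^ j) at_top sequentially"
    by (rule filterlim_tendsto_pos_mult_at_top[OF t2 cl inf])
  moreover have "\<bar>\<Sum>\<mu>\<in>M'. c \<mu> * (\<mu>/l) ^ j\<bar> * l ^ j = \<bar>\<Sum>\<mu>\<in>M. c \<mu> * \<mu> ^ j\<bar>" for j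
    using l1 by (simp add: eqM eq2 abs_mult)
  ultimately show ?thesis by simp
qed




lemma cantor_lt: "cantor_set A a b \<Longrightarrow> a < b"
proof -
  assume h: "cantor_set A a b"
  then have "A \<subseteq> {a..b}" "a \<in> A" "uncountable A" by (auto simp: cantor_set_def)
  then show "a < b"
  proof (cases "a < b")
    case False
    with \<open>A \<subseteq> {a..b}\<close> have "A \<subseteq> {a}" by auto
    then have "countable A" using countable_subset by blast
    with \<open>uncountable A\<close> show ?thesis by simp
  qed simp
qed

lemma cantor_gap:
  assumes cb: "cantor_built B \<Gamma> A c d" and uv: "u < v"
  shows "\<exists>u' v'. u' < v' \<and> {u'<..<v'} \<subseteq> {u<..<v} \<and> B \<inter> {u'<..<v'} = {}"
proof (cases "\<exists>i\<in>\<Gamma>. max u (c i) < min v (d i)")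
  case True
  then obtain i where i: "i \<in> \<Gamma>" "max u (c i) < min v (d i)" by blast
  have cs: "cantor_set (A i) (c i) (d i)" using cb i by (auto simp: cantor_built_def)
  then have clA: "closed (A i)" and intA: "interior (A i) = {}"
    by (auto simp: cantor_set_def closure_closed)
  define K where "K = {max u (c i)<..<min v (d i)} - A i"
  have oK: "open K" unfolding K_def using clA by (intro open_Diff) auto
  have "K \<noteq> {}"
  proof
    assume "K = {}"
    then have "{max u (c i)<..<min v (d i)} \<subseteq> A i" by (auto simp: K_def)
    then have "{max u (c i)<..<min v (d i)} \<subseteq> interior (A i)"
      by (intro interior_maximal) auto
    with intA i show False by auto
  qed
  then obtain x where x: "x \<in> K" by blast
  then obtain e where e: "e > 0" "ball x e \<subseteq> K" using oK open_contains_ball by blast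
  have ball_eq: "ball x e = {x-e<..<x+e}"
    by (auto simp: ball_def dist_real_def abs_less_iff)
  have sub: "{x-e<..<x+e} \<subseteq> K" using e ball_eq by simp
  show ?thesis
  proof (intro exI conjI)
    show "x - e < x + e" using e by simp
    show "{x-e<..<x+e} \<subseteq> {u<..<v}" using sub by (auto simp: K_def)
    show "B \<inter> {x-e<..<x+e} = {}"
    proof (rule ccontr)
      assume "B \<inter> {x-e<..<x+e} \<noteq> {}"
      then obtain y where y: "y \<in> B" "y \<in> K" using sub by blast
      then obtain k where k: "k \<in> \<Gamma>" "y \<in> A k" using cb by (auto simp: cantor_built_def)
      have "k \<noteq> i" using y k by (auto simp: K_def)
      then have m0: "measure lebesgue ({c k..d k} \<inter> {c i..d i}) = 0"
        using cb k i unfolding cantor_built_def by blast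
      have csk: "cantor_set (A k) (c k) (d k)" using cb k by (auto simp: cantor_built_def)
      have "c k < d k" using cantor_lt[OF csk] .
      moreover have "y \<in> {c k..d k}" using csk k by (auto simp: cantor_set_def)
      moreover have "c i < y" "y < d i" using y by (auto simp: K_def)
      ultimately have lt: "max (c k) (c i) < min (d k) (d i)" by auto
      have "measure lebesgue ({c k..d k} \<inter> {c i..d i}) = min (d k) (d i) - max (c k) (c i)"
        using lt by (simp add: Int_atLeastAtMost)
      with m0 lt show False by (simp add: min_def max_def split: if_splits)
    qed
  qed
next
  case False
  show ?thesis
  proof (intro exI conjI)
    show "u < v" by fact
    show "{u<..<v} \<subseteq> {u<..<v}" by simp
    show "B \<inter> {u<..<v} = {}"
    proof (rule ccontr)
      assume "B \<inter> {u<..<v} \<noteq> {}"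
      then obtain y where y: "y \<in> B" "u < y" "y < v" by auto
      then obtain k where k: "k \<in> \<Gamma>" "y \<in> A k" using cb by (auto simp: cantor_built_def)
      have csk: "cantor_set (A k) (c k) (d k)" using cb k by (auto simp: cantor_built_def)
      have "c k < d k" using cantor_lt[OF csk] .
      moreover have "y \<in> {c k..d k}" using csk k by (auto simp: cantor_set_def)
      ultimately have "max u (c k) < min v (d k)" using y by auto
      with False k show False by auto
    qed
  qed
qed

lemma cantor_gap_many:
  fixes B :: "nat \<Rightarrow> real set" and N :: nat
  assumes cb: "\<And>j. j \<ge> 1 \<Longrightarrow> cantor_built (B j) (\<Gamma> j) (A j) (c j) (d j)" and uv: "u < v"
  shows "\<exists>u' v'. u' < v' \<and> {u'<..<v'} \<subseteq> {u<..<v} \<and> (\<forall>j. 1 \<le> j \<and> j < N \<longrightarrow> B j \<inter> {u'<..<v'} = {})"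
proof (induction N)
  case 0
  then show ?case using uv by blast
next
  case (Suc N)
  then obtain u' v' where h: "u' < v'" "{u'<..<v'} \<subseteq> {u<..<v}" "\<forall>j. 1 \<le> j \<and> j < N \<longrightarrow> B j \<inter> {u'<..<v'} = {}"
    by blast
  show ?case
  proof (cases "N \<ge> 1")
    case True
    obtain u'' v'' where h2: "u'' < v''" "{u''<..<v''} \<subseteq> {u'<..<v'}" "B N \<inter> {u''<..<v''} = {}"
      using cantor_gap[OF cb[OF True] h(1)] by blast
    show ?thesis
    proof (intro exI conjI allI impI)
      show "u'' < v''" by fact
      show "{u''<..<v''} \<subseteq> {u<..<v}" using h2 h by blast
      fix j assume "1 \<le> j \<and> j < Suc N"
      then have "j < N \<or> j = N" by auto
      then show "B j \<inter> {u''<..<v''} = {}"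
        using h(3) h2 \<open>1 \<le> j \<and> j < Suc N\<close> by blast
    qed
  next
    case False
    then show ?thesis using h by (intro exI[of _ u'] exI[of _ v']) auto
  qed
qed




locale setup3 =
  fixes B :: "nat \<Rightarrow> real set"
    and \<Gamma> :: "nat \<Rightarrow> 'i set" and A :: "nat \<Rightarrow> 'i \<Rightarrow> real set"
    and c d :: "nat \<Rightarrow> 'i \<Rightarrow> real"
    and I :: "'c set" and \<theta> :: "'c \<Rightarrow> real"
    and g :: "'c \<Rightarrow> real \<Rightarrow> real"
  assumes built: "\<And>j. j \<ge> 1 \<Longrightarrow> cantor_built (B j) (\<Gamma> j) (A j) (c j) (d j)"
    and meas: "\<And>j. j \<ge> 1 \<Longrightarrow> measure lebesgue (B j) = 1 / ((exp 1 - 1) * fact j)"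
    and overlap: "\<And>j k. j \<ge> 1 \<Longrightarrow> k \<ge> 1 \<Longrightarrow> j \<noteq> k \<Longrightarrow> measure lebesgue (B j \<inter> B k) = 0"
    and union: "measure lebesgue (\<Union>j\<in>{1..}. B j) = 1"
    and theta_gt: "\<And>\<alpha>. \<alpha> \<in> I \<Longrightarrow> \<theta> \<alpha> > 1"
    and lin_indep: "\<And>F q. F \<subseteq> I \<Longrightarrow> finite F \<Longrightarrow>
                     (\<Sum>\<alpha>\<in>F. of_rat (q \<alpha>) * ln (\<theta> \<alpha>)) = 0 \<Longrightarrow> (\<forall>\<alpha>\<in>F. q \<alpha> = 0)"
    and g_def: "\<And>\<alpha> x. g \<alpha> x = (\<Sum>j. \<theta> \<alpha> ^ Suc j * indicator (B (Suc j)) x)"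
begin

lemma Bsub: "j \<ge> 1 \<Longrightarrow> B j \<subseteq> {0..1}"
proof
  fix x assume j: "j \<ge> 1" and x: "x \<in> B j"
  have cb: "cantor_built (B j) (\<Gamma> j) (A j) (c j) (d j)" using built j .
  then obtain i where i: "i \<in> \<Gamma> j" "x \<in> A j i" using x by (auto simp: cantor_built_def)
  then have "x \<in> {c j i..d j i}" using cb by (auto simp: cantor_built_def cantor_set_def)
  moreover have "{c j i..d j i} \<subseteq> {0..1}" using cb i by (auto simp: cantor_built_def)
  ultimately show "x \<in> {0..1}" by blast
qed

lemma Bpos: "j \<ge> 1 \<Longrightarrow> measure lebesgue (B j) > 0"
proof -
  assume "j \<ge> 1"
  have "exp (1::real) > 1" by simp
  then have "(exp 1 - 1) * fact j > (0::real)" by simp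
  then show ?thesis using meas[OF \<open>j \<ge> 1\<close>] by simp
qed

lemma Bmeas: "j \<ge> 1 \<Longrightarrow> B j \<in> sets lebesgue"
  using Bpos measure_notin_sets by fastforce

lemma fin_null: "(S::real set) \<in> sets lebesgue \<Longrightarrow> S \<subseteq> {0..1} \<Longrightarrow> measure lebesgue S = 0 \<Longrightarrow> S \<in> null_sets lebesgue"
proof -
  assume S: "S \<in> sets lebesgue" "S \<subseteq> {0..1}" "measure lebesgue S = 0"
  have m01: "{0..1::real} \<in> sets lebesgue" by simp
  have "emeasure lebesgue S \<le> emeasure lebesgue {0..1::real}"
    by (rule emeasure_mono[OF S(2) m01])
  moreover have "emeasure lebesgue {0..1::real} = 1" by simp
  ultimately have "emeasure lebesgue S \<noteq> top"
    by (metis ennreal_one_less_top linorder_not_le)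
  then have "emeasure lebesgue S = ennreal (measure lebesgue S)"
    by (rule emeasure_eq_ennreal_measure)
  then have "emeasure lebesgue S = 0" by (simp only: S(3) ennreal_0)
  then show ?thesis using S(1) by (rule null_setsI)
qed

definition uniq :: "real \<Rightarrow> nat \<Rightarrow> bool" where
  "uniq x j \<longleftrightarrow> j \<ge> 1 \<and> x \<in> B j \<and> (\<forall>k\<ge>1. k \<noteq> j \<longrightarrow> x \<notin> B k)"

lemma AE_uniq: "AE x in lebesgue. x \<in> {0..1} \<longrightarrow> (\<exists>j. uniq x j)"
proof -
  define U where "U = (\<Union>j\<in>{1..}. B j)"
  have Umeas: "U \<in> sets lebesgue" unfolding U_def using Bmeas by auto
  have Usub: "U \<subseteq> {0..1}" unfolding U_def using Bsub by auto
  have N1: "{0..1} - U \<in> null_sets lebesgue"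
  proof (rule fin_null)
    show "{0..1} - U \<in> sets lebesgue" using Umeas by auto
    show "{0..1} - U \<subseteq> {0..1}" by auto
    have "measure lebesgue ({0..1} - U) = measure lebesgue {0..1::real} - measure lebesgue U"
      using Umeas Usub by (intro measure_Diff) auto
    then show "measure lebesgue ({0..1} - U) = 0" using union by (simp add: U_def)
  qed
  define N2 where "N2 = (\<Union>j. \<Union>k. if 1 \<le> j \<and> 1 \<le> k \<and> j \<noteq> k then B j \<inter> B k else {})"
  have N2: "N2 \<in> null_sets lebesgue"
    unfolding N2_def
  proof (intro null_sets_UN)
    fix j k :: nat
    show "(if 1 \<le> j \<and> 1 \<le> k \<and> j \<noteq> k then B j \<inter> B k else {}) \<in> null_sets lebesgue"
    proof (cases "1 \<le> j \<and> 1 \<le> k \<and> j \<noteq> k")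
      case True
      have "B j \<inter> B k \<in> null_sets lebesgue"
      proof (rule fin_null)
        show "B j \<inter> B k \<in> sets lebesgue" using Bmeas True by auto
        show "B j \<inter> B k \<subseteq> {0..1}" using Bsub True by auto
        show "measure lebesgue (B j \<inter> B k) = 0" using overlap True by auto
      qed
      then show ?thesis using True by simp
    next
      case False
      then show ?thesis by (simp only: if_False) simp
    qed
  qed
  have "{x \<in> space lebesgue. \<not> (x \<in> {0..1} \<longrightarrow> (\<exists>j. uniq x j))} \<subseteq> ({0..1} - U) \<union> N2"
  proof
    fix x assume x: "x \<in> {x \<in> space lebesgue. \<not> (x \<in> {0..1} \<longrightarrow> (\<exists>j. uniq x j))}"
    show "x \<in> ({0..1} - U) \<union> N2"
    proof (cases "x \<in> U")
      case True
      then obtain j where j: "j \<ge> 1" "x \<in> B j" by (auto simp: U_def)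
      with x obtain k where "k \<ge> 1" "k \<noteq> j" "x \<in> B k" by (auto simp: uniq_def)
      then show ?thesis using j unfolding N2_def
        by (auto intro!: UN_I[of j] UN_I[of k] split: if_splits)
    qed (use x in auto)
  qed
  then show ?thesis using N1 N2 by (intro AE_I'[of "({0..1} - U) \<union> N2"]) auto
qed

lemma uniq_unique: "uniq x j \<Longrightarrow> uniq x k \<Longrightarrow> j = k"
  by (auto simp: uniq_def)

lemma g_val: "uniq x j \<Longrightarrow> g a x = \<theta> a ^ j"
proof -
  assume u: "uniq x j"
  then have j: "j \<ge> 1" "x \<in> B j" by (auto simp: uniq_def)
  have "g a x = (\<Sum>i\<in>{j-1}. \<theta> a ^ Suc i * indicator (B (Suc i)) x)"
    unfolding g_def
  proof (rule suminf_finite)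
    fix i assume "i \<notin> {j - 1}"
    then have "Suc i \<noteq> j" "Suc i \<ge> 1" using j by auto
    then have "x \<notin> B (Suc i)" using u by (auto simp: uniq_def)
    then show "\<theta> a ^ Suc i * indicator (B (Suc i)) x = 0" by simp
  qed simp
  also have "\<dots> = \<theta> a ^ j" using j by simp
  finally show ?thesis .
qed

lemma g_meas: "g a \<in> borel_measurable (lebesgue_on {0..1})"
proof -
  have "(\<lambda>x. \<Sum>j. \<theta> a ^ Suc j * indicator (B (Suc j)) x) \<in> borel_measurable (lebesgue_on {0..1})"
  proof (intro borel_measurable_suminf borel_measurable_times borel_measurable_const)
    fix j
    have "B (Suc j) \<in> sets lebesgue" using Bmeas by simp
    then have "indicator (B (Suc j)) \<in> borel_measurable lebesgue"
      by (simp add: borel_measurable_indicator)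
    then show "(\<lambda>x. indicator (B (Suc j)) x :: real) \<in> borel_measurable (lebesgue_on {0..1})"
      by (rule measurable_restrict_space1)
  qed
  then show ?thesis by (simp add: g_def[abs_def])
qed

end



context setup3 begin

context
  fixes n :: nat and \<alpha> :: "nat \<Rightarrow> 'c" and P :: "(nat \<Rightarrow> nat) \<Rightarrow> real"
  assumes aI: "\<alpha> ` {..<n} \<subseteq> I" and pin: "poly_in n P" and nc: "no_const_term P"
begin

definition "Sp = {k. P k \<noteq> 0}"
definition "mu k = (\<Prod>i<n. \<theta> (\<alpha> i) ^ k i)"
definition "h j = (\<Sum>k\<in>Sp. P k * mu k ^ j)"
definition "ff x = peval P (\<lambda>i. g (\<alpha> i) x)"

lemma finSp: "finite Sp" using pin by (simp add: poly_in_def Sp_def)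

lemma supp: "k \<in> Sp \<Longrightarrow> \<not> i < n \<Longrightarrow> k i = 0"
  using pin by (auto simp: poly_in_def Sp_def)

lemma theta_pos: "i < n \<Longrightarrow> \<theta> (\<alpha> i) > 1"
  using aI theta_gt by auto

lemma mu_gt: "k \<in> Sp \<Longrightarrow> mu k > 1"
proof -
  assume k: "k \<in> Sp"
  have "k \<noteq> (\<lambda>_. 0)" using k nc by (auto simp: Sp_def no_const_term_def)
  then obtain i where i: "k i \<noteq> 0" by auto
  then have "i < n" using supp[OF k] by (cases "i < n") auto
  have "mu k = \<theta> (\<alpha> i) ^ k i * (\<Prod>i'\<in>{..<n}-{i}. \<theta> (\<alpha> i') ^ k i')"
    unfolding mu_def using \<open>i < n\<close> by (simp add: prod.remove)
  moreover have "\<theta> (\<alpha> i) ^ k i > 1" using theta_pos[OF \<open>i<n\<close>] i by simp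
  moreover have "(\<Prod>i'\<in>{..<n}-{i}. \<theta> (\<alpha> i') ^ k i') \<ge> 1"
    using theta_pos by (intro prod_ge_1 one_le_power) (auto intro: less_imp_le)
  ultimately show ?thesis
    by (metis less_1_mult less_le_trans less_numeral_extra(1) linorder_not_le mult.right_neutral mult_less_cancel_left_pos order.strict_iff_not)
qed

lemma ff_val: "uniq x j \<Longrightarrow> ff x = h j"
proof -
  assume u: "uniq x j"
  have "ff x = peval P (\<lambda>i. \<theta> (\<alpha> i) ^ j)" unfolding ff_def using g_val[OF u] by simp
  also have "\<dots> = (\<Sum>k\<in>Sp. P k * mu k ^ j)"
    unfolding peval_def Sp_def[symmetric]
  proof (rule sum.cong[OF refl])
    fix k assume k: "k \<in> Sp"
    have "(\<Prod>i\<in>{i. k i \<noteq> 0}. (\<theta> (\<alpha> i) ^ j) ^ k i) = (\<Prod>i\<in>{i. k i \<noteq> 0}. (\<theta> (\<alpha> i) ^ k i) ^ j)"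
      by (metis (no_types, lifting) mult.commute power_mult)
    also have "\<dots> = (\<Prod>i\<in>{i. k i \<noteq> 0}. \<theta> (\<alpha> i) ^ k i) ^ j"
      by (simp add: prod_power_distrib)
    also have "(\<Prod>i\<in>{i. k i \<noteq> 0}. \<theta> (\<alpha> i) ^ k i) = mu k"
      unfolding mu_def
    proof (rule prod.mono_neutral_left)
      show "{i. k i \<noteq> 0} \<subseteq> {..<n}"
      proof
        fix i assume "i \<in> {i. k i \<noteq> 0}"
        then show "i \<in> {..<n}" using supp[OF k, of i] by auto
      qed
    qed auto
    finally show "P k * (\<Prod>i\<in>{i. k i \<noteq> 0}. (\<theta> (\<alpha> i) ^ j) ^ k i) = P k * mu k ^ j" by simp
  qed
  finally show ?thesis by (simp add: h_def)
qed

lemma h_bound: "\<bar>h j\<bar> \<le> (\<Sum>k\<in>Sp. \<bar>P k\<bar> * mu k ^ j)"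
proof -
  have "\<bar>h j\<bar> \<le> (\<Sum>k\<in>Sp. \<bar>P k * mu k ^ j\<bar>)" unfolding h_def by (rule sum_abs)
  also have "\<dots> = (\<Sum>k\<in>Sp. \<bar>P k\<bar> * mu k ^ j)"
  proof (intro sum.cong refl)
    fix k assume "k \<in> Sp"
    then have "mu k > 0" using mu_gt by fastforce
    then show "\<bar>P k * mu k ^ j\<bar> = \<bar>P k\<bar> * mu k ^ j" by (simp add: abs_mult)
  qed
  finally show ?thesis .
qed

lemma ff_meas: "ff \<in> borel_measurable (lebesgue_on {0..1})"
proof -
  note g_meas[measurable]
  show ?thesis unfolding ff_def[abs_def] peval_def by measurable
qed

lemma h_group: "h j = (\<Sum>y\<in>mu ` Sp. (\<Sum>k\<in>{k\<in>Sp. mu k = y}. P k) * y ^ j)"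
proof -
  have "h j = (\<Sum>y\<in>mu ` Sp. \<Sum>k\<in>{k\<in>Sp. mu k = y}. P k * mu k ^ j)"
    unfolding h_def by (rule sum.image_gen[OF finSp])
  also have "\<dots> = (\<Sum>y\<in>mu ` Sp. (\<Sum>k\<in>{k\<in>Sp. mu k = y}. P k) * y ^ j)"
    by (intro sum.cong refl) (auto simp: sum_distrib_right)
  finally show ?thesis .
qed

lemma dich: "(\<forall>j. h j = 0) \<or> filterlim (\<lambda>j. \<bar>h j\<bar>) at_top sequentially"
proof (cases "\<exists>y\<in>mu ` Sp. (\<Sum>k\<in>{k\<in>Sp. mu k = y}. P k) \<noteq> 0")
  case True
  have "filterlim (\<lambda>j::nat. \<bar>\<Sum>y\<in>mu ` Sp. (\<Sum>k\<in>{k\<in>Sp. mu k = y}. P k) * y ^ j\<bar>) at_top sequentially"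
    using True finSp mu_gt by (intro dom_lemma) auto
  then show ?thesis by (simp add: h_group)
next
  case False
  have "h j = 0" for j
    unfolding h_group using False by (intro sum.neutral) auto
  then show ?thesis by blast
qed

lemma mu_inj: "inj_on \<alpha> {..<n} \<Longrightarrow> inj_on mu Sp"
proof (rule inj_onI)
  fix k k' assume inj: "inj_on \<alpha> {..<n}" and k: "k \<in> Sp" "k' \<in> Sp" and eq: "mu k = mu k'"
  have lnmu: "ln (mu k) = (\<Sum>i<n. real (k i) * ln (\<theta> (\<alpha> i)))" if "k \<in> Sp" for k
  proof -
    have "\<forall>i<n. \<theta> (\<alpha> i) > 0" using theta_pos by (meson less_trans zero_less_one)
    then show ?thesis unfolding mu_def by (subst ln_prod) (auto simp: ln_realpow)
  qed
  define q where "q b = (of_int (int (k (inv_into {..<n} \<alpha> b)) - int (k' (inv_into {..<n} \<alpha> b))) :: rat)" for b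
  have "(\<Sum>b\<in>\<alpha> ` {..<n}. of_rat (q b) * ln (\<theta> b)) = (\<Sum>i<n. of_rat (q (\<alpha> i)) * ln (\<theta> (\<alpha> i)))"
    by (rule sum.reindex_cong[OF inj refl refl])
  also have "\<dots> = (\<Sum>i<n. (real (k i) - real (k' i)) * ln (\<theta> (\<alpha> i)))"
    using inj by (intro sum.cong refl) (simp add: q_def inv_into_f_f of_rat_diff)
  also have "\<dots> = ln (mu k) - ln (mu k')"
    using lnmu[OF k(1)] lnmu[OF k(2)] by (simp add: sum_subtractf left_diff_distrib)
  also have "\<dots> = 0" using eq by simp
  finally have "\<forall>b\<in>\<alpha> ` {..<n}. q b = 0" using aI by (intro lin_indep) auto
  then have "\<forall>i<n. k i = k' i" using inj by (auto simp: q_def inv_into_f_f)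
  then show "k = k'" using supp[OF k(1)] supp[OF k(2)] by (metis ext)
qed

lemma inj_lim: "inj_on \<alpha> {..<n} \<Longrightarrow> P k \<noteq> 0 \<Longrightarrow> filterlim (\<lambda>j. \<bar>h j\<bar>) at_top sequentially"
proof -
  assume inj: "inj_on \<alpha> {..<n}" and Pk: "P k \<noteq> 0"
  have kS: "k \<in> Sp" using Pk by (simp add: Sp_def)
  have "{k'\<in>Sp. mu k' = mu k} = {k}" using mu_inj[OF inj] kS by (auto dest: inj_onD)
  then have "(\<Sum>k'\<in>{k'\<in>Sp. mu k' = mu k}. P k') \<noteq> 0" using Pk by simp
  then have ne: "(\<Sum>k'\<in>{k'\<in>Sp. mu k' = mu k}. P k') \<noteq> 0" .
  have "\<not> (\<forall>j. h j = 0)"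
  proof -
    have "filterlim (\<lambda>j::nat. \<bar>\<Sum>y\<in>mu ` Sp. (\<Sum>k\<in>{k\<in>Sp. mu k = y}. P k) * y ^ j\<bar>) at_top sequentially"
      using ne kS finSp mu_gt by (intro dom_lemma) auto
    then have "filterlim (\<lambda>j. \<bar>h j\<bar>) at_top sequentially" by (simp add: h_group)
    then have "eventually (\<lambda>j. 1 \<le> \<bar>h j\<bar>) sequentially" by (simp add: filterlim_at_top)
    then obtain j where "1 \<le> \<bar>h j\<bar>" by (auto simp: eventually_sequentially)
    then show ?thesis by (metis abs_zero not_one_le_zero)
  qed
  then show ?thesis using dich by blast
qed

lemma Bemeas: "j \<ge> 1 \<Longrightarrow> emeasure lebesgue (B j) = ennreal (1 / ((exp 1 - 1) * fact j))"
proof -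
  assume j: "j \<ge> 1"
  have "emeasure lebesgue (B j) \<noteq> top"
  proof
    assume "emeasure lebesgue (B j) = top"
    then have "measure lebesgue (B j) = 0" by (simp add: measure_def)
    with Bpos[OF j] show False by simp
  qed
  then show ?thesis using meas[OF j] by (simp add: emeasure_eq_ennreal_measure)
qed

lemma AE_uniq_on: "AE x in lebesgue_on {0..1}. \<exists>j. uniq x j"
  using AE_uniq by (subst AE_restrict_space_iff) auto

lemma ff_int: "integrable (lebesgue_on {0..1}) ff"
proof (rule integrableI_bounded[OF ff_meas])
  define L where "L = lebesgue_on {0..1::real}"
  define F where "F x = (\<Sum>j. ennreal \<bar>h (Suc j)\<bar> * indicator (B (Suc j)) x)" for x
  have BL: "B (Suc j) \<in> sets L" for j
    unfolding L_def using Bmeas[of "Suc j"] Bsub[of "Suc j"] by (subst sets_restrict_space_iff) auto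
  have AEF: "AE x in L. ennreal (norm (ff x)) = F x"
    unfolding L_def using AE_uniq_on
  proof (rule AE_mp, intro AE_I2 impI)
    fix x assume "\<exists>j. uniq x j"
    then obtain j where u: "uniq x j" by blast
    then have j: "j \<ge> 1" "x \<in> B j" by (auto simp: uniq_def)
    have "F x = (\<Sum>i\<in>{j-1}. ennreal \<bar>h (Suc i)\<bar> * indicator (B (Suc i)) x)"
      unfolding F_def
    proof (rule suminf_finite)
      fix i assume "i \<notin> {j - 1}"
      then have "Suc i \<noteq> j" "Suc i \<ge> 1" using j by auto
      then have "x \<notin> B (Suc i)" using u by (auto simp: uniq_def)
      then show "ennreal \<bar>h (Suc i)\<bar> * indicator (B (Suc i)) x = 0" by simp
    qed simp
    also have "\<dots> = ennreal \<bar>h j\<bar>" using j by simp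
    finally show "ennreal (norm (ff x)) = F x" using ff_val[OF u] by simp
  qed
  define t where "t j = \<bar>h (Suc j)\<bar> * (1 / ((exp 1 - 1) * fact (Suc j)))" for j
  have e1: "exp (1::real) - 1 > 0" by simp
  have tnn: "t j \<ge> 0" for j unfolding t_def using e1 by simp
  define u where "u j = (\<Sum>k\<in>Sp. \<bar>P k\<bar> * (inverse (fact (Suc j)) * mu k ^ Suc j)) / (exp 1 - 1)" for j
  have su: "summable u"
    unfolding u_def
  proof (intro summable_divide summable_sum summable_mult)
    fix k
    show "summable (\<lambda>j. inverse (fact (Suc j)) * mu k ^ Suc j :: real)"
      using summable_exp[of "mu k"] by (subst summable_Suc_iff)
  qed
  have tu: "norm (t j) \<le> u j" for j
  proof -
    have "norm (t j) = t j" using tnn[of j] by simp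
    also have "\<dots> = \<bar>h (Suc j)\<bar> * inverse (fact (Suc j)) / (exp 1 - 1)"
      unfolding t_def by (simp add: divide_inverse inverse_mult_distrib mult_ac)
    also have "\<dots> \<le> (\<Sum>k\<in>Sp. \<bar>P k\<bar> * mu k ^ Suc j) * inverse (fact (Suc j)) / (exp 1 - 1)"
      using e1 h_bound[of "Suc j"] by (intro divide_right_mono mult_right_mono) auto
    also have "\<dots> = u j" unfolding u_def
      by (simp add: sum_distrib_left sum_distrib_right mult_ac)
    finally show ?thesis .
  qed
  have st: "summable t" by (rule summable_comparison_test'[OF su tu])
  have "(\<integral>\<^sup>+ x. ennreal (norm (ff x)) \<partial>L) = (\<integral>\<^sup>+ x. F x \<partial>L)"
    by (rule nn_integral_cong_AE[OF AEF])
  also have "\<dots> = (\<Sum>j. \<integral>\<^sup>+ x. ennreal \<bar>h (Suc j)\<bar> * indicator (B (Suc j)) x \<partial>L)"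
    unfolding F_def
    by (intro nn_integral_suminf borel_measurable_times_ennreal borel_measurable_const borel_measurable_indicator BL)
  also have "\<dots> = (\<Sum>j. ennreal (t j))"
  proof (intro suminf_cong)
    fix j
    have "emeasure L (B (Suc j)) = emeasure lebesgue (B (Suc j))"
      unfolding L_def using Bsub[of "Suc j"] by (intro emeasure_restrict_space) auto
    also have "\<dots> = ennreal (1 / ((exp 1 - 1) * fact (Suc j)))" by (rule Bemeas) simp
    finally have emeq: "emeasure L (B (Suc j)) = ennreal (1 / ((exp 1 - 1) * fact (Suc j)))" .
    have pos: "0 \<le> 1 / ((exp 1 - 1) * fact (Suc j) :: real)"
    proof -
      have fp: "(0::real) < fact (Suc j)" by (rule fact_gt_zero)
      have "0 < (exp 1 - 1) * (fact (Suc j) :: real)" using e1 fp by (rule mult_pos_pos)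
      then show ?thesis by simp
    qed
    have "(\<integral>\<^sup>+ x. ennreal \<bar>h (Suc j)\<bar> * indicator (B (Suc j)) x \<partial>L) = ennreal \<bar>h (Suc j)\<bar> * emeasure L (B (Suc j))"
      by (rule nn_integral_cmult_indicator[OF BL])
    also have "\<dots> = ennreal \<bar>h (Suc j)\<bar> * ennreal (1 / ((exp 1 - 1) * fact (Suc j)))"
      unfolding emeq ..
    also have "\<dots> = ennreal (t j)"
      unfolding t_def by (rule ennreal_mult[OF abs_ge_zero pos, symmetric])
    finally show "(\<integral>\<^sup>+ x. ennreal \<bar>h (Suc j)\<bar> * indicator (B (Suc j)) x \<partial>L) = ennreal (t j)" .
  qed
  also have "\<dots> = ennreal (\<Sum>j. t j)" using tnn st by (rule suminf_ennreal2)
  also have "\<dots> < \<infinity>" by simp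
  finally show "(\<integral>\<^sup>+ x. ennreal (norm (ff x)) \<partial>lebesgue_on {0..1}) < \<infinity>" by (simp add: L_def)
qed

lemma AE_zero_iff: "(AE x in lebesgue_on {0..1}. ff x = 0) \<longleftrightarrow> (\<forall>j\<ge>1. h j = 0)"
proof
  assume H: "\<forall>j\<ge>1. h j = 0"
  show "AE x in lebesgue_on {0..1}. ff x = 0"
    using AE_uniq_on
  proof (rule AE_mp, intro AE_I2 impI)
    fix x assume "\<exists>j. uniq x j"
    then obtain j where u: "uniq x j" by blast
    then show "ff x = 0" using H ff_val[OF u] by (auto simp: uniq_def)
  qed
next
  assume A: "AE x in lebesgue_on {0..1}. ff x = 0"
  show "\<forall>j\<ge>1. h j = 0"
  proof (intro allI impI, rule ccontr)
    fix j :: nat assume j: "j \<ge> 1" and hj: "h j \<noteq> 0"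
    have "AE x in lebesgue_on {0..1}. x \<notin> B j"
      using A AE_uniq_on
    proof (eventually_elim)
      case (elim x)
      then obtain j' where u: "uniq x j'" by blast
      show "x \<notin> B j"
      proof
        assume "x \<in> B j"
        then have "j' = j" using u j by (auto simp: uniq_def)
        then show False using ff_val[OF u] elim hj by simp
      qed
    qed
    then have "AE x in lebesgue. x \<in> {0..1} \<longrightarrow> x \<notin> B j"
      by (rule AE_restrict_space_iff[THEN iffD1, rotated]) simp
    then have "AE x in lebesgue. x \<notin> B j"
    proof (eventually_elim)
      case (elim x)
      then show ?case using Bsub[OF j] by auto
    qed
    moreover have e1: "{x \<in> space lebesgue. \<not> x \<notin> B j} = B j" by simp
    ultimately have "emeasure lebesgue (B j) = 0"
      using AE_iff_measurable[OF Bmeas[OF j] e1] by simp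
    then show False using Bemeas[OF j] Bpos[OF j] meas[OF j] by simp
  qed
qed

lemma unbdd:
  assumes lim: "filterlim (\<lambda>j. \<bar>h j\<bar>) at_top sequentially" and J: "nondeg_subinterval J"
  shows "\<not> (\<exists>M. AE x in lebesgue_on J. \<bar>ff x\<bar> \<le> M)"
proof
  assume "\<exists>M. AE x in lebesgue_on J. \<bar>ff x\<bar> \<le> M"
  then obtain M where M: "AE x in lebesgue_on J. \<bar>ff x\<bar> \<le> M" by blast
  from J obtain x y where xy: "x \<in> J" "y \<in> J" "x < y" and iJ: "is_interval J" and J01: "J \<subseteq> {0..1}"
    by (auto simp: nondeg_subinterval_def)
  have Jm: "J \<in> sets lebesgue" using iJ by (simp add: real_interval_borel_measurable)
  have "eventually (\<lambda>j. M + 1 \<le> \<bar>h j\<bar>) sequentially" using lim by (simp add: filterlim_at_top)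
  then obtain N where N: "\<And>j. j \<ge> N \<Longrightarrow> M + 1 \<le> \<bar>h j\<bar>" by (auto simp: eventually_sequentially)
  obtain u v where uv: "u < v" "{u<..<v} \<subseteq> {x<..<y}" "\<forall>j. 1 \<le> j \<and> j < N \<longrightarrow> B j \<inter> {u<..<v} = {}"
    using cantor_gap_many[where B=B and \<Gamma>=\<Gamma> and A=A and c=c and d=d and u=x and v=y and N=N, OF built xy(3)] by blast
  have sJ: "{u<..<v} \<subseteq> J"
  proof
    fix z assume "z \<in> {u<..<v}"
    then have "x \<le> z" "z \<le> y" using uv by auto
    then show "z \<in> J" using iJ xy unfolding is_interval_1 by blast
  qed
  have M': "AE z in lebesgue. z \<in> J \<longrightarrow> \<bar>ff z\<bar> \<le> M"
    using M by (rule AE_restrict_space_iff[THEN iffD1, rotated]) (simp add: Jm)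
  have "AE z in lebesgue. z \<notin> {u<..<v}"
    using M' AE_uniq
  proof (eventually_elim)
    case (elim z)
    show "z \<notin> {u<..<v}"
    proof
      assume zin: "z \<in> {u<..<v}"
      then have "z \<in> J" using sJ by blast
      then have "z \<in> {0..1}" using J01 by blast
      then obtain j where u: "uniq z j" using elim by blast
      then have "j \<ge> 1" "z \<in> B j" by (auto simp: uniq_def)
      have "j \<ge> N"
      proof (rule ccontr)
        assume "\<not> N \<le> j"
        then have "B j \<inter> {u<..<v} = {}" using uv(3) \<open>1 \<le> j\<close> by simp
        then show False using \<open>z \<in> B j\<close> zin by blast
      qed
      then have "M + 1 \<le> \<bar>ff z\<bar>" using N ff_val[OF u] by simp
      moreover have "\<bar>ff z\<bar> \<le> M" using elim \<open>z \<in> J\<close> by blast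
      ultimately show False by simp
    qed
  qed
  moreover have e1: "{x \<in> space lebesgue. \<not> x \<notin> {u<..<v}} = {u<..<v}" by auto
  moreover have e2: "{u<..<v} \<in> sets lebesgue" by simp
  ultimately have "emeasure lebesgue {u<..<v} = 0"
    using AE_iff_measurable[OF e2 e1] by simp
  then show False using uv(1) by simp
qed

lemma part2_ctx: "inj_on \<alpha> {..<n} \<Longrightarrow>
  (AE x in lebesgue_on {0..1}. peval P (\<lambda>i. g (\<alpha> i) x) = 0) \<longleftrightarrow> (\<forall>k. P k = 0)"
proof -
  assume inj: "inj_on \<alpha> {..<n}"
  have eq: "(AE x in lebesgue_on {0..1}. peval P (\<lambda>i. g (\<alpha> i) x) = 0) \<longleftrightarrow> (\<forall>j\<ge>1. h j = 0)"
    using AE_zero_iff by (simp add: ff_def)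
  show ?thesis
  proof
    assume "AE x in lebesgue_on {0..1}. peval P (\<lambda>i. g (\<alpha> i) x) = 0"
    then have H: "\<forall>j\<ge>1. h j = 0" using eq by blast
    show "\<forall>k. P k = 0"
    proof (rule ccontr)
      assume "\<not> (\<forall>k. P k = 0)"
      then obtain k where "P k \<noteq> 0" by blast
      then have "filterlim (\<lambda>j. \<bar>h j\<bar>) at_top sequentially" by (rule inj_lim[OF inj])
      then have "eventually (\<lambda>j. 1 \<le> \<bar>h j\<bar>) sequentially" by (simp add: filterlim_at_top)
      then obtain N where N: "\<And>j. j \<ge> N \<Longrightarrow> 1 \<le> \<bar>h j\<bar>" by (auto simp: eventually_sequentially)
      have "1 \<le> \<bar>h (max N 1)\<bar>" using N by simp
      moreover have "h (max N 1) = 0" using H by simp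
      ultimately show False by simp
    qed
  next
    assume "\<forall>k. P k = 0"
    then have "Sp = {}" by (simp add: Sp_def)
    then have "\<forall>j\<ge>1. h j = 0" by (simp add: h_def)
    then show "AE x in lebesgue_on {0..1}. peval P (\<lambda>i. g (\<alpha> i) x) = 0" using eq by blast
  qed
qed

lemma part3_ctx: "(AE x in lebesgue_on {0..1}. peval P (\<lambda>i. g (\<alpha> i) x) = 0)
   \<or> inG (\<lambda>x. peval P (\<lambda>i. g (\<alpha> i) x))"
proof -
  have fe: "(\<lambda>x. peval P (\<lambda>i. g (\<alpha> i) x)) = ff" by (intro ext) (rule ff_def[symmetric])
  show ?thesis
  proof (cases "\<forall>j. h j = 0")
    case True
    then have "\<forall>j\<ge>1. h j = 0" by simp
    then have "AE x in lebesgue_on {0..1}. ff x = 0" by (simp only: AE_zero_iff)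
    then have "AE x in lebesgue_on {0..1}. peval P (\<lambda>i. g (\<alpha> i) x) = 0" by (simp only: ff_def)
    then show ?thesis by (rule disjI1)
  next
    case False
    then have lim: "filterlim (\<lambda>j. \<bar>h j\<bar>) at_top sequentially" using dich by blast
    have "inG ff" unfolding inG_def
    proof (intro conjI allI impI)
      show "integrable (lebesgue_on {0..1}) ff" by (rule ff_int)
      fix J assume "nondeg_subinterval J"
      then show "\<not> (\<exists>M. AE x in lebesgue_on J. \<bar>ff x\<bar> \<le> M)" by (rule unbdd[OF lim])
    qed
    then have "inG (\<lambda>x. peval P (\<lambda>i. g (\<alpha> i) x))" by (simp only: fe)
    then show ?thesis by (rule disjI2)
  qed
qed

end
end



theorem mainTheorem3:
  fixes B :: "nat \<Rightarrow> real set"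
    and \<Gamma> :: "nat \<Rightarrow> 'i set" and A :: "nat \<Rightarrow> 'i \<Rightarrow> real set"
    and c d :: "nat \<Rightarrow> 'i \<Rightarrow> real"
    and I :: "'c set" and \<theta> :: "'c \<Rightarrow> real"
    and g :: "'c \<Rightarrow> real \<Rightarrow> real"
  assumes built: "\<And>j. j \<ge> 1 \<Longrightarrow> cantor_built (B j) (\<Gamma> j) (A j) (c j) (d j)"
    and meas: "\<And>j. j \<ge> 1 \<Longrightarrow> measure lebesgue (B j) = 1 / ((exp 1 - 1) * fact j)"
    and overlap: "\<And>j k. j \<ge> 1 \<Longrightarrow> k \<ge> 1 \<Longrightarrow> j \<noteq> k \<Longrightarrow> measure lebesgue (B j \<inter> B k) = 0"
    and union: "measure lebesgue (\<Union>j\<in>{1..}. B j) = 1"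
    and dense: "\<And>J. nondeg_subinterval J \<Longrightarrow>
                  \<exists>j0. \<forall>j\<ge>j0. j \<ge> 1 \<longrightarrow> (\<exists>i\<in>\<Gamma> j. A j i \<subseteq> J)"
    and card: "I \<approx> (UNIV :: real set)"
    and theta_gt: "\<And>\<alpha>. \<alpha> \<in> I \<Longrightarrow> \<theta> \<alpha> > 1"
    and lin_indep: "\<And>F q. F \<subseteq> I \<Longrightarrow> finite F \<Longrightarrow>
                     (\<Sum>\<alpha>\<in>F. of_rat (q \<alpha>) * ln (\<theta> \<alpha>)) = 0 \<Longrightarrow> (\<forall>\<alpha>\<in>F. q \<alpha> = 0)"
    and g_def: "\<And>\<alpha> x. g \<alpha> x = (\<Sum>j. \<theta> \<alpha> ^ Suc j * indicator (B (Suc j)) x)"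
  shows "(\<forall>\<alpha>\<in>I. g \<alpha> \<in> borel_measurable (lebesgue_on {0..1}))
      \<and> (\<forall>n (\<alpha>::nat \<Rightarrow> 'c) P. \<alpha> ` {..<n} \<subseteq> I \<longrightarrow> inj_on \<alpha> {..<n} \<longrightarrow>
            poly_in n P \<longrightarrow> no_const_term P \<longrightarrow>
            ((AE x in lebesgue_on {0..1}. peval P (\<lambda>i. g (\<alpha> i) x) = 0) \<longleftrightarrow> (\<forall>k. P k = 0)))
      \<and> (\<forall>n (\<alpha>::nat \<Rightarrow> 'c) P. \<alpha> ` {..<n} \<subseteq> I \<longrightarrow>
            poly_in n P \<longrightarrow> no_const_term P \<longrightarrow>
            ((AE x in lebesgue_on {0..1}. peval P (\<lambda>i. g (\<alpha> i) x) = 0)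
             \<or> inG (\<lambda>x. peval P (\<lambda>i. g (\<alpha> i) x))))"
proof -
  interpret S: setup3 B \<Gamma> A c d I \<theta> g
    using built meas overlap union theta_gt lin_indep g_def by (rule setup3.intro)
  have 1: "\<forall>\<alpha>\<in>I. g \<alpha> \<in> borel_measurable (lebesgue_on {0..1})"
    using S.g_meas by (rule ballI)
  have 2: "\<forall>n (\<alpha>::nat \<Rightarrow> 'c) P. \<alpha> ` {..<n} \<subseteq> I \<longrightarrow> inj_on \<alpha> {..<n} \<longrightarrow>
            poly_in n P \<longrightarrow> no_const_term P \<longrightarrow>
            ((AE x in lebesgue_on {0..1}. peval P (\<lambda>i. g (\<alpha> i) x) = 0) \<longleftrightarrow> (\<forall>k. P k = 0))"
  proof (intro allI impI)
    fix n and \<alpha> :: "nat \<Rightarrow> 'c" and P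
    assume a: "\<alpha> ` {..<n} \<subseteq> I" and inj: "inj_on \<alpha> {..<n}" and p: "poly_in n P" and nc: "no_const_term P"
    show "(AE x in lebesgue_on {0..1}. peval P (\<lambda>i. g (\<alpha> i) x) = 0) \<longleftrightarrow> (\<forall>k. P k = 0)"
      by (rule S.part2_ctx[OF a p nc inj])
  qed
  have 3: "\<forall>n (\<alpha>::nat \<Rightarrow> 'c) P. \<alpha> ` {..<n} \<subseteq> I \<longrightarrow>
            poly_in n P \<longrightarrow> no_const_term P \<longrightarrow>
            ((AE x in lebesgue_on {0..1}. peval P (\<lambda>i. g (\<alpha> i) x) = 0)
             \<or> inG (\<lambda>x. peval P (\<lambda>i. g (\<alpha> i) x)))"
  proof (intro allI impI)
    fix n and \<alpha> :: "nat \<Rightarrow> 'c" and P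
    assume a: "\<alpha> ` {..<n} \<subseteq> I" and p: "poly_in n P" and nc: "no_const_term P"
    show "(AE x in lebesgue_on {0..1}. peval P (\<lambda>i. g (\<alpha> i) x) = 0)
             \<or> inG (\<lambda>x. peval P (\<lambda>i. g (\<alpha> i) x))"
      by (rule S.part3_ctx[OF a p nc])
  qed
  show ?thesis using 1 2 3 by (intro conjI)
qed


end
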